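(* Let $p$ be a prime, $G$ a finite abelian $p$-group, and $\varphi\colon A\to B$ an isomorphism between subgroups of $G$. Let $r\ge 1$ be an integer such that for every integer $s>r$ and every $g\in G$: $g\in H(G,\varphi)$ if and only if $\varphi^i(g)$ is defined for $i=0,\dots,s-1$. Fix an integer $s>r$. For $i\in\mathbb{Z}/s\mathbb{Z}$ let $G_i=G\times\{i\}$, $A_i=A\times\{i\}$, $B_i=B\times\{i\}$ be copies of $G,A,B$, and let $K=G_0*_{A_0=B_1}G_1*_{A_1=B_2}\cdots*_{A_{s-2}=B_{s-1}}G_{s-1}$, where the amalgamation $A_i=B_{i+1}$ identifies $a\times i$ with $\varphi(a)\times(i+1)$ for $a\in A$. Then for every $j\in\{0,\dots,s-1\}$ the homomorphism $G_j\to H_1(K;\mathbb{Z})$ induced by the inclusion $G_j\to K$ is injective.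
   Context: The core $H(G,\varphi)$ is $\bigcap_k H_k$ where $H_0=A\cap B$ and $H_{k+1}=\varphi^{-1}(H_k)\cap H_k\cap\varphi(H_k)$ (with $\varphi^{-1}(H_k)=\{a\in A:\varphi(a)\in H_k\}$). "$\varphi^i(g)$ is defined" means $g$ lies in the domain of the $i$-fold composite of $\varphi$ regarded as a partial map $G\to G$. *)

theory Defs
  imports "HOL-Algebra.Algebra" "HOL-Computational_Algebra.Primes"
begin

text \<open>phi regarded as a partial map G -> G with domain A:
  iter_defined G A phi i g  means  phi^i(g) is defined.\<close>
fun iter_defined :: "('g, 'b) monoid_scheme \<Rightarrow> 'g set \<Rightarrow> ('g \<Rightarrow> 'g) \<Rightarrow> nat \<Rightarrow> 'g \<Rightarrow> bool" where
  "iter_defined G A phi 0 g = (g \<in> carrier G)"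
| "iter_defined G A phi (Suc i) g = (g \<in> A \<and> iter_defined G A phi i (phi g))"

fun core_step :: "'g set \<Rightarrow> 'g set \<Rightarrow> ('g \<Rightarrow> 'g) \<Rightarrow> nat \<Rightarrow> 'g set" where
  "core_step A B phi 0 = A \<inter> B"
| "core_step A B phi (Suc k) =
     {a \<in> A. phi a \<in> core_step A B phi k} \<inter> core_step A B phi k \<inter> phi ` core_step A B phi k"

definition core :: "'g set \<Rightarrow> 'g set \<Rightarrow> ('g \<Rightarrow> 'g) \<Rightarrow> 'g set" where
  "core A B phi = (\<Inter>k. core_step A B phi k)"

text \<open>The amalgamated free product
  K = G_0 *_{A_0=B_1} G_1 * ... *_{A_(s-2)=B_(s-1)} G_(s-1),
  given by the standard presentation: words in the letters (i,x), i < s, x in G,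
  modulo the congruence generated by the multiplication tables of the G_i and
  the amalgamation relations (i,a) = (i+1, phi a) for a in A, i+1 < s.\<close>
definition amal_letters :: "('g, 'b) monoid_scheme \<Rightarrow> nat \<Rightarrow> (nat \<times> 'g) set" where
  "amal_letters G s = {(i, x). i < s \<and> x \<in> carrier G}"

inductive amal_eq :: "('g, 'b) monoid_scheme \<Rightarrow> 'g set \<Rightarrow> ('g \<Rightarrow> 'g) \<Rightarrow> nat
    \<Rightarrow> (nat \<times> 'g) list \<Rightarrow> (nat \<times> 'g) list \<Rightarrow> bool"
  for G A phi s where
  refl: "w \<in> lists (amal_letters G s) \<Longrightarrow> amal_eq G A phi s w w"
| sym: "amal_eq G A phi s u v \<Longrightarrow> amal_eq G A phi s v u"
| trans: "amal_eq G A phi s u v \<Longrightarrow> amal_eq G A phi s v w \<Longrightarrow> amal_eq G A phi s u w"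
| cong: "amal_eq G A phi s u u' \<Longrightarrow> amal_eq G A phi s v v' \<Longrightarrow> amal_eq G A phi s (u @ v) (u' @ v')"
| unit: "i < s \<Longrightarrow> amal_eq G A phi s [(i, \<one>\<^bsub>G\<^esub>)] []"
| mult: "i < s \<Longrightarrow> x \<in> carrier G \<Longrightarrow> y \<in> carrier G \<Longrightarrow>
           amal_eq G A phi s [(i, x), (i, y)] [(i, x \<otimes>\<^bsub>G\<^esub> y)]"
| amalg: "Suc i < s \<Longrightarrow> a \<in> A \<Longrightarrow> amal_eq G A phi s [(i, a)] [(Suc i, phi a)]"

definition amal_rel :: "('g, 'b) monoid_scheme \<Rightarrow> 'g set \<Rightarrow> ('g \<Rightarrow> 'g) \<Rightarrow> nat
    \<Rightarrow> ((nat \<times> 'g) list \<times> (nat \<times> 'g) list) set" where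
  "amal_rel G A phi s = {(u, v). amal_eq G A phi s u v}"

definition amal_product :: "('g, 'b) monoid_scheme \<Rightarrow> 'g set \<Rightarrow> ('g \<Rightarrow> 'g) \<Rightarrow> nat
    \<Rightarrow> ((nat \<times> 'g) list set) monoid" where
  "amal_product G A phi s =
    \<lparr>carrier = lists (amal_letters G s) // amal_rel G A phi s,
     monoid.mult = (\<lambda>CX CY. amal_rel G A phi s `` {(SOME u. u \<in> CX) @ (SOME v. v \<in> CY)}),
     one = amal_rel G A phi s `` {[]}\<rparr>"

definition amal_incl :: "('g, 'b) monoid_scheme \<Rightarrow> 'g set \<Rightarrow> ('g \<Rightarrow> 'g) \<Rightarrow> nat \<Rightarrow> nat
    \<Rightarrow> 'g \<Rightarrow> (nat \<times> 'g) list set" where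
  "amal_incl G A phi s j x = amal_rel G A phi s `` {[(j, x)]}"

text \<open>H_1(K; Z) = abelianization K / [K,K], and the map it induces.\<close>
definition abelianization :: "('a, 'c) monoid_scheme \<Rightarrow> 'a set monoid" where
  "abelianization K = K Mod (derived K (carrier K))"

definition to_abelianization :: "('a, 'c) monoid_scheme \<Rightarrow> 'a \<Rightarrow> 'a set" where
  "to_abelianization K x = derived K (carrier K) #>\<^bsub>K\<^esub> x"

end

theory Submission
  imports Defs
begin


definition qmon :: "'a set \<Rightarrow> ('a list \<times> 'a list) set \<Rightarrow> 'a list set monoid" where
  "qmon S E = \<lparr>carrier = lists S // E,
     monoid.mult = (\<lambda>CX CY. E `` {(SOME u. u \<in> CX) @ (SOME v. v \<in> CY)}),
     one = E `` {[]}\<rparr>"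

lemma quot_some:
  assumes "equiv LL E" "CX \<in> LL // E"
  shows "(SOME u. u \<in> CX) \<in> CX" "CX = E `` {SOME u. u \<in> CX}" "(SOME u. u \<in> CX) \<in> LL"
proof -
  obtain x where x: "x \<in> LL" "CX = E``{x}" using assms(2) by (auto elim: quotientE)
  have "x \<in> CX" using x equiv_class_self[OF assms(1)] by simp
  then show s: "(SOME u. u \<in> CX) \<in> CX" by (rule someI)
  then have "(x, SOME u. u \<in> CX) \<in> E" using x by simp
  then show "CX = E `` {SOME u. u \<in> CX}" using x assms(1) equiv_class_eq by metis
  show "(SOME u. u \<in> CX) \<in> LL" using s x assms(1) unfolding equiv_def refl_on_def by blast
qed

lemma quot_class_some:
  assumes "equiv LL E" "u \<in> LL"
  shows "(u, SOME a. a \<in> E``{u}) \<in> E"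
proof -
  have "u \<in> E``{u}" using equiv_class_self[OF assms] .
  then have "(SOME a. a \<in> E``{u}) \<in> E``{u}" by (rule someI)
  then show ?thesis by simp
qed

lemma qmon_mult:
  assumes eq: "equiv (lists S) E"
    and cg: "\<And>u u' v v'. (u,u') \<in> E \<Longrightarrow> (v,v') \<in> E \<Longrightarrow> (u@v, u'@v') \<in> E"
    and "u \<in> lists S" "v \<in> lists S"
  shows "E``{u} \<otimes>\<^bsub>qmon S E\<^esub> E``{v} = E``{u@v}"
proof -
  have "(u@v, (SOME a. a \<in> E``{u}) @ (SOME b. b \<in> E``{v})) \<in> E"
    using cg quot_class_some[OF eq assms(3)] quot_class_some[OF eq assms(4)] by blast
  then show ?thesis using eq unfolding qmon_def by (simp add: equiv_class_eq)
qed

lemma qmon_group: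
  assumes eq: "equiv (lists S) E"
    and cg: "\<And>u u' v v'. (u,u') \<in> E \<Longrightarrow> (v,v') \<in> E \<Longrightarrow> (u@v, u'@v') \<in> E"
    and linv: "\<And>x. x \<in> S \<Longrightarrow> \<exists>w \<in> lists S. (w @ [x], []) \<in> E"
  shows "group (qmon S E)"
proof -
  have rf: "(u,u) \<in> E" if "u \<in> lists S" for u using eq that by (meson equiv_def refl_onD)
  have mul: "E``{u} \<otimes>\<^bsub>qmon S E\<^esub> E``{v} = E``{u@v}" if "u \<in> lists S" "v \<in> lists S" for u v
    using qmon_mult[OF eq cg that] .
  have cl: "E``{u} \<in> carrier (qmon S E)" if "u \<in> lists S" for u
    using that by (simp add: qmon_def quotientI)
  have rep: "\<exists>u \<in> lists S. CX = E``{u}" if "CX \<in> carrier (qmon S E)" for CX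
    using that by (auto simp: qmon_def elim!: quotientE)
  have winv: "\<exists>w \<in> lists S. (w @ u, []) \<in> E" if "u \<in> lists S" for u
    using that
  proof (induction u rule: lists.induct)
    case Nil have "([], []) \<in> E" using rf by simp
    then show ?case by (intro bexI[of _ "[]"]) auto
  next
    case (Cons x u)
    obtain w' where w': "w' \<in> lists S" "(w' @ u, []) \<in> E" using Cons.IH by blast
    obtain wx where wx: "wx \<in> lists S" "(wx @ [x], []) \<in> E" using linv[OF Cons.hyps(1)] by blast
    have uS: "u \<in> lists S" using Cons.hyps(2) .
    have "(w' @ ((wx @ [x]) @ u), w' @ ([] @ u)) \<in> E"
      by (rule cg[OF rf[OF w'(1)] cg[OF wx(2) rf[OF uS]]])
    then have "((w' @ wx) @ x # u, w' @ u) \<in> E" by simp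
    then have "((w' @ wx) @ x # u, []) \<in> E" using w'(2) eq unfolding equiv_def by (meson transD)
    moreover have "w' @ wx \<in> lists S" using w' wx by simp
    ultimately show ?case by blast
  qed
  have one: "\<one>\<^bsub>qmon S E\<^esub> = E``{[]}" by (simp add: qmon_def)
  show ?thesis
  proof (rule groupI)
    fix CX CY assume a: "CX \<in> carrier (qmon S E)" "CY \<in> carrier (qmon S E)"
    obtain u where u: "u \<in> lists S" "CX = E``{u}" using rep[OF a(1)] by blast
    obtain v where v: "v \<in> lists S" "CY = E``{v}" using rep[OF a(2)] by blast
    show "CX \<otimes>\<^bsub>qmon S E\<^esub> CY \<in> carrier (qmon S E)"
      unfolding u(2) v(2) mul[OF u(1) v(1)] using u(1) v(1) by (intro cl) simp
  next
    show "\<one>\<^bsub>qmon S E\<^esub> \<in> carrier (qmon S E)" unfolding one by (rule cl) simp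
  next
    fix CX CY CZ assume a: "CX \<in> carrier (qmon S E)" "CY \<in> carrier (qmon S E)" "CZ \<in> carrier (qmon S E)"
    obtain u where u: "u \<in> lists S" "CX = E``{u}" using rep[OF a(1)] by blast
    obtain v where v: "v \<in> lists S" "CY = E``{v}" using rep[OF a(2)] by blast
    obtain w where w: "w \<in> lists S" "CZ = E``{w}" using rep[OF a(3)] by blast
    have uv: "u @ v \<in> lists S" "v @ w \<in> lists S" using u v w by simp_all
    show "CX \<otimes>\<^bsub>qmon S E\<^esub> CY \<otimes>\<^bsub>qmon S E\<^esub> CZ = CX \<otimes>\<^bsub>qmon S E\<^esub> (CY \<otimes>\<^bsub>qmon S E\<^esub> CZ)"
      unfolding u(2) v(2) w(2) mul[OF u(1) v(1)] mul[OF v(1) w(1)] mul[OF uv(1) w(1)] mul[OF u(1) uv(2)]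
      by simp
  next
    fix CX assume a: "CX \<in> carrier (qmon S E)"
    obtain u where u: "u \<in> lists S" "CX = E``{u}" using rep[OF a] by blast
    show "\<one>\<^bsub>qmon S E\<^esub> \<otimes>\<^bsub>qmon S E\<^esub> CX = CX"
      unfolding one u(2) mul[OF _ u(1)] using mul[of "[]" u] u(1) by simp
  next
    fix CX assume a: "CX \<in> carrier (qmon S E)"
    obtain u where u: "u \<in> lists S" "CX = E``{u}" using rep[OF a] by blast
    obtain w where w: "w \<in> lists S" "(w @ u, []) \<in> E" using winv[OF u(1)] by blast
    have "E``{w @ u} = E``{[]}" using equiv_class_eq[OF eq w(2)] .
    then have "E``{w} \<otimes>\<^bsub>qmon S E\<^esub> CX = \<one>\<^bsub>qmon S E\<^esub>" unfolding one u(2) mul[OF w(1) u(1)] .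
    then show "\<exists>CY \<in> carrier (qmon S E). CY \<otimes>\<^bsub>qmon S E\<^esub> CX = \<one>\<^bsub>qmon S E\<^esub>"
      using cl[OF w(1)] by blast
  qed
qed



definition seqgrp :: "('g,'b) monoid_scheme \<Rightarrow> (nat \<Rightarrow> 'g) monoid" where
  "seqgrp G = \<lparr>carrier = {t. \<forall>k. t k \<in> carrier G}, monoid.mult = (\<lambda>t t' k. t k \<otimes>\<^bsub>G\<^esub> t' k), one = (\<lambda>k. \<one>\<^bsub>G\<^esub>)\<rparr>"

definition cf :: "('g,'b) monoid_scheme \<Rightarrow> ('g \<Rightarrow> 'g) \<Rightarrow> (nat \<Rightarrow> 'g) \<Rightarrow> nat \<Rightarrow> 'g" where
  "cf G phi \<alpha> = (\<lambda>k. if k = 0 then \<alpha> 0 else \<alpha> k \<otimes>\<^bsub>G\<^esub> inv\<^bsub>G\<^esub> (phi (\<alpha> (k - 1))))"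

definition relgrp :: "('g,'b) monoid_scheme \<Rightarrow> 'g set \<Rightarrow> ('g \<Rightarrow> 'g) \<Rightarrow> nat \<Rightarrow> (nat \<Rightarrow> 'g) set" where
  "relgrp G A phi s = cf G phi ` {\<alpha>. (\<forall>k. \<alpha> k \<in> A) \<and> (\<forall>k. s - 1 \<le> k \<longrightarrow> \<alpha> k = \<one>\<^bsub>G\<^esub>)}"

fun wmap :: "('g,'b) monoid_scheme \<Rightarrow> (nat \<times> 'g) list \<Rightarrow> nat \<Rightarrow> 'g" where
  "wmap G [] = (\<lambda>k. \<one>\<^bsub>G\<^esub>)"
| "wmap G (l # w) = (\<lambda>k. (if k = fst l then snd l else \<one>\<^bsub>G\<^esub>) \<otimes>\<^bsub>G\<^esub> wmap G w k)"

locale amal = comm_group G for G :: "'g monoid" (structure) +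
  fixes A B :: "'g set" and phi :: "'g \<Rightarrow> 'g" and s :: nat
  assumes subA: "subgroup A G" and subB: "subgroup B G"
    and phi_iso: "phi \<in> iso (G\<lparr>carrier := A\<rparr>) (G\<lparr>carrier := B\<rparr>)"
begin

lemma A_carr: "a \<in> A \<Longrightarrow> a \<in> carrier G" by (rule subgroup.mem_carrier[OF subA])
lemma phi_hom: "phi \<in> hom (G\<lparr>carrier := A\<rparr>) (G\<lparr>carrier := B\<rparr>)"
  using phi_iso by (simp add: iso_def)
lemma phiB: "a \<in> A \<Longrightarrow> phi a \<in> B"
  using hom_in_carrier[OF phi_hom, of a] by simp
lemma phi_carr: "a \<in> A \<Longrightarrow> phi a \<in> carrier G" by (rule subgroup.mem_carrier[OF subB phiB])
lemma phi_mult: "a \<in> A \<Longrightarrow> b \<in> A \<Longrightarrow> phi (a \<otimes> b) = phi a \<otimes> phi b"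
  using hom_mult[OF phi_hom, of a b] by simp
lemma phi_inj: "inj_on phi A"
  using phi_iso unfolding iso_def bij_betw_def by simp
lemma one_A: "\<one> \<in> A" by (rule subgroup.one_closed[OF subA])
lemma phi_one: "phi \<one> = \<one>"
proof -
  have "phi \<one> \<otimes> phi \<one> = phi \<one>" using phi_mult[OF one_A one_A] by simp
  then show ?thesis using r_cancel_one[OF phi_carr[OF one_A] phi_carr[OF one_A]] by simp
qed


lemma phi_inv: "a \<in> A \<Longrightarrow> phi (inv a) = inv (phi a)"
proof -
  assume a: "a \<in> A"
  have ia: "inv a \<in> A" by (rule subgroup.m_inv_closed[OF subA a])
  have "phi (inv a) \<otimes> phi a = \<one>"
    using phi_mult[OF ia a] a A_carr phi_one by simp
  then show ?thesis using inv_equality[of "phi (inv a)" "phi a"] phi_carr[OF a] phi_carr[OF ia] by simp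
qed

abbreviation "SS \<equiv> amal_letters G s"
abbreviation "EE \<equiv> amal_rel G A phi s"
abbreviation "KK \<equiv> amal_product G A phi s"
abbreviation "TT \<equiv> seqgrp G"
abbreviation "RR \<equiv> relgrp G A phi s"

lemma eq_lists: "amal_eq G A phi s u v \<Longrightarrow> u \<in> lists SS \<and> v \<in> lists SS"
proof (induction rule: amal_eq.induct)
  case (amalg i a)
  then show ?case using A_carr[OF amalg(2)] phi_carr[OF amalg(2)] by (simp add: amal_letters_def)
qed (auto simp: amal_letters_def)

lemma E_equiv: "equiv (lists SS) EE"
proof (rule equivI)
  show "refl_on (lists SS) EE"
    unfolding refl_on_def amal_rel_def by (auto intro: amal_eq.refl dest: eq_lists)
  show "EE \<subseteq> lists SS \<times> lists SS" unfolding amal_rel_def by (auto dest: eq_lists)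
  show "sym EE" unfolding sym_def amal_rel_def by (auto intro: amal_eq.sym)
  show "trans EE" unfolding trans_def amal_rel_def by (auto intro: amal_eq.trans)
qed

lemma E_cong: "(u,u') \<in> EE \<Longrightarrow> (v,v') \<in> EE \<Longrightarrow> (u@v, u'@v') \<in> EE"
  unfolding amal_rel_def by (simp add: amal_eq.cong)

lemma E_linv: "x \<in> SS \<Longrightarrow> \<exists>w \<in> lists SS. (w @ [x], []) \<in> EE"
proof -
  assume "x \<in> SS"
  then obtain i g where x: "x = (i, g)" "i < s" "g \<in> carrier G" by (auto simp: amal_letters_def)
  have "amal_eq G A phi s [(i, inv g), (i, g)] [(i, inv g \<otimes> g)]"
    using x by (intro amal_eq.mult) auto
  then have "amal_eq G A phi s [(i, inv g), (i, g)] [(i, \<one>)]" using x by simp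
  then have "amal_eq G A phi s [(i, inv g), (i, g)] []"
    using amal_eq.unit[OF x(2)] amal_eq.trans by blast
  moreover have "[(i, inv g)] \<in> lists SS" using x by (simp add: amal_letters_def)
  ultimately show ?thesis unfolding amal_rel_def x by (intro bexI[of _ "[(i, inv g)]"]) auto
qed

lemma K_eq: "KK = qmon SS EE" by (simp add: amal_product_def qmon_def)

lemma K_group: "group KK"
  unfolding K_eq by (rule qmon_group[OF E_equiv E_cong E_linv])

lemma K_mult: "u \<in> lists SS \<Longrightarrow> v \<in> lists SS \<Longrightarrow> EE``{u} \<otimes>\<^bsub>KK\<^esub> EE``{v} = EE``{u@v}"
  unfolding K_eq by (rule qmon_mult[OF E_equiv E_cong])

lemma K_carr: "CX \<in> carrier KK \<Longrightarrow> \<exists>u \<in> lists SS. CX = EE``{u}"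
  by (auto simp: amal_product_def elim!: quotientE)

lemma K_carrI: "u \<in> lists SS \<Longrightarrow> EE``{u} \<in> carrier KK"
  by (simp add: amal_product_def quotientI)

lemma T_carr: "t \<in> carrier TT \<longleftrightarrow> (\<forall>k. t k \<in> carrier G)" by (simp add: seqgrp_def)
lemma T_mult: "t \<otimes>\<^bsub>TT\<^esub> t' = (\<lambda>k. t k \<otimes> t' k)" by (simp add: seqgrp_def)
lemma T_one: "\<one>\<^bsub>TT\<^esub> = (\<lambda>k. \<one>)" by (simp add: seqgrp_def)

lemma T_comm: "comm_group TT"
proof (rule comm_groupI)
  fix x assume x: "x \<in> carrier TT"
  have "(\<lambda>k. inv (x k)) \<otimes>\<^bsub>TT\<^esub> x = \<one>\<^bsub>TT\<^esub>"
    using x unfolding T_mult T_one T_carr by (intro ext) simp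
  moreover have "(\<lambda>k. inv (x k)) \<in> carrier TT" using x unfolding T_carr by simp
  ultimately show "\<exists>y\<in>carrier TT. y \<otimes>\<^bsub>TT\<^esub> x = \<one>\<^bsub>TT\<^esub>" by blast
qed (auto simp: T_mult T_one T_carr m_ac intro!: ext)

lemma T_group: "group TT" using T_comm comm_group.axioms(2) by blast

lemma T_inv: "t \<in> carrier TT \<Longrightarrow> inv\<^bsub>TT\<^esub> t = (\<lambda>k. inv (t k))"
  by (rule group.inv_equality[OF T_group]) (auto simp: T_mult T_one T_carr)


definition "adm \<alpha> \<longleftrightarrow> (\<forall>k. \<alpha> k \<in> A) \<and> (\<forall>k. s - 1 \<le> k \<longrightarrow> \<alpha> k = \<one>)"

lemma R_def': "RR = cf G phi ` {\<alpha>. adm \<alpha>}" by (simp add: relgrp_def adm_def)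

lemma cf_carr: "adm \<alpha> \<Longrightarrow> cf G phi \<alpha> \<in> carrier TT"
  unfolding T_carr cf_def adm_def using A_carr phi_carr by simp

lemma cf_mult: "adm \<alpha> \<Longrightarrow> adm \<beta> \<Longrightarrow> cf G phi \<alpha> \<otimes>\<^bsub>TT\<^esub> cf G phi \<beta> = cf G phi (\<lambda>k. \<alpha> k \<otimes> \<beta> k)"
  unfolding T_mult cf_def adm_def
  by (intro ext) (simp add: phi_mult inv_mult A_carr phi_carr m_ac)

lemma cf_inv: "adm \<alpha> \<Longrightarrow> inv\<^bsub>TT\<^esub> (cf G phi \<alpha>) = cf G phi (\<lambda>k. inv (\<alpha> k))"
  using cf_carr[of \<alpha>] unfolding T_inv[OF cf_carr] unfolding cf_def adm_def
  by (intro ext) (simp add: phi_inv inv_mult A_carr phi_carr m_ac)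

lemma adm_mult: "adm \<alpha> \<Longrightarrow> adm \<beta> \<Longrightarrow> adm (\<lambda>k. \<alpha> k \<otimes> \<beta> k)"
  unfolding adm_def by (simp add: subgroup.m_closed[OF subA])

lemma adm_inv: "adm \<alpha> \<Longrightarrow> adm (\<lambda>k. inv (\<alpha> k))"
  unfolding adm_def by (simp add: subgroup.m_inv_closed[OF subA])

lemma adm_one: "adm (\<lambda>k. \<one>)" unfolding adm_def using one_A by simp

lemma R_sub: "subgroup RR TT"
proof (rule group.subgroupI[OF T_group])
  show "RR \<subseteq> carrier TT" unfolding R_def' using cf_carr by blast
  show "RR \<noteq> {}" unfolding R_def' using adm_one by blast
  fix a assume "a \<in> RR"
  then obtain \<alpha> where "adm \<alpha>" "a = cf G phi \<alpha>" unfolding R_def' by blast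
  then show "inv\<^bsub>TT\<^esub> a \<in> RR" unfolding R_def' using cf_inv adm_inv by blast
next
  fix a b assume "a \<in> RR" "b \<in> RR"
  then obtain \<alpha> \<beta> where "adm \<alpha>" "a = cf G phi \<alpha>" "adm \<beta>" "b = cf G phi \<beta>" unfolding R_def' by blast
  then show "a \<otimes>\<^bsub>TT\<^esub> b \<in> RR" unfolding R_def' using cf_mult adm_mult by blast
qed

lemma R_normal: "RR \<lhd> TT" using comm_group.subgroup_imp_normal[OF T_comm R_sub] .

abbreviation "QQ \<equiv> TT Mod RR"

lemma Q_comm: "comm_group QQ" using comm_group.abelian_FactGroup[OF T_comm R_sub] .

lemma wmap_carr: "w \<in> lists SS \<Longrightarrow> wmap G w \<in> carrier TT"
  by (induction w rule: lists.induct) (auto simp: T_carr amal_letters_def)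

lemma wmap_append: "u \<in> lists SS \<Longrightarrow> v \<in> lists SS \<Longrightarrow> wmap G (u @ v) = wmap G u \<otimes>\<^bsub>TT\<^esub> wmap G v"
proof (induction u rule: lists.induct)
  case Nil
  then show ?case using wmap_carr[OF Nil] by (auto simp: T_mult T_carr)
next
  case (Cons x u)
  then show ?case using wmap_carr[OF Cons(2)] wmap_carr[OF Cons(4)]
    by (auto simp: T_mult T_carr amal_letters_def m_assoc intro!: ext)
qed


lemma resp: "amal_eq G A phi s u v \<Longrightarrow> RR #>\<^bsub>TT\<^esub> wmap G u = RR #>\<^bsub>TT\<^esub> wmap G v"
proof (induction rule: amal_eq.induct)
  case (cong u u' v v')
  have l: "u \<in> lists SS" "u' \<in> lists SS" "v \<in> lists SS" "v' \<in> lists SS"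
    using eq_lists[OF cong(1)] eq_lists[OF cong(2)] by auto
  have "RR #>\<^bsub>TT\<^esub> wmap G (u @ v) = (RR #>\<^bsub>TT\<^esub> wmap G u) <#>\<^bsub>TT\<^esub> (RR #>\<^bsub>TT\<^esub> wmap G v)"
    using normal.rcos_sum[OF R_normal wmap_carr[OF l(1)] wmap_carr[OF l(3)]] wmap_append[OF l(1) l(3)] by simp
  also have "\<dots> = (RR #>\<^bsub>TT\<^esub> wmap G u') <#>\<^bsub>TT\<^esub> (RR #>\<^bsub>TT\<^esub> wmap G v')" using cong.IH by simp
  also have "\<dots> = RR #>\<^bsub>TT\<^esub> wmap G (u' @ v')"
    using normal.rcos_sum[OF R_normal wmap_carr[OF l(2)] wmap_carr[OF l(4)]] wmap_append[OF l(2) l(4)] by simp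
  finally show ?case .
next
  case (unit i)
  have "wmap G [(i, \<one>)] = wmap G []" by (auto intro!: ext)
  then show ?case by simp
next
  case (mult i x y)
  have "wmap G [(i, x), (i, y)] = wmap G [(i, x \<otimes> y)]" using mult by (auto intro!: ext)
  then show ?case by simp
next
  case (amalg i a)
  have a: "a \<in> carrier G" "phi a \<in> carrier G" using A_carr phi_carr amalg(2) by auto
  define \<alpha> where "\<alpha> = (\<lambda>k. if k = i then a else \<one>)"
  have adm: "adm \<alpha>" unfolding adm_def \<alpha>_def using amalg one_A by auto
  have eq: "wmap G [(i, a)] = cf G phi \<alpha> \<otimes>\<^bsub>TT\<^esub> wmap G [(Suc i, phi a)]"
    unfolding T_mult cf_def \<alpha>_def using a phi_one by (auto intro!: ext)
  have wc: "wmap G [(Suc i, phi a)] \<in> carrier TT" using a by (simp add: T_carr)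
  have "wmap G [(i, a)] \<in> RR #>\<^bsub>TT\<^esub> wmap G [(Suc i, phi a)]"
    unfolding eq r_coset_def R_def' using adm by blast
  then show ?case using group.repr_independence[OF T_group _ wc R_sub] by simp
qed (auto)

definition Psi :: "(nat \<times> 'g) list set \<Rightarrow> (nat \<Rightarrow> 'g) set" where
  "Psi CX = RR #>\<^bsub>TT\<^esub> wmap G (SOME u. u \<in> CX)"

lemma Psi_class: "u \<in> lists SS \<Longrightarrow> Psi (EE``{u}) = RR #>\<^bsub>TT\<^esub> wmap G u"
  unfolding Psi_def using resp quot_class_some[OF E_equiv, of u] by (simp add: amal_rel_def)

lemma Psi_hom: "group_hom KK QQ Psi"
proof -
  have "Psi \<in> hom KK QQ"
  proof (rule homI)
    fix CX assume "CX \<in> carrier KK"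
    then obtain u where u: "u \<in> lists SS" "CX = EE``{u}" using K_carr by blast
    show "Psi CX \<in> carrier QQ" unfolding u(2) Psi_class[OF u(1)] carrier_FactGroup
      using wmap_carr[OF u(1)] by blast
  next
    fix CX CY assume "CX \<in> carrier KK" "CY \<in> carrier KK"
    then obtain u v where u: "u \<in> lists SS" "CX = EE``{u}" and v: "v \<in> lists SS" "CY = EE``{v}"
      using K_carr by metis
    have uv: "u @ v \<in> lists SS" using u v by simp
    show "Psi (CX \<otimes>\<^bsub>KK\<^esub> CY) = Psi CX \<otimes>\<^bsub>QQ\<^esub> Psi CY"
      unfolding u(2) v(2) K_mult[OF u(1) v(1)] Psi_class[OF u(1)] Psi_class[OF v(1)] Psi_class[OF uv]
        mult_FactGroup wmap_append[OF u(1) v(1)]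
      using normal.rcos_sum[OF R_normal wmap_carr[OF u(1)] wmap_carr[OF v(1)]] by simp
  qed
  then show ?thesis
    using K_group comm_group.axioms(2)[OF Q_comm] by (simp add: group_hom_def group_hom_axioms_def)
qed


lemma kernel:
  assumes adm: "adm \<alpha>" and j: "j < s" and z: "z \<in> carrier G"
    and c: "\<And>k. cf G phi \<alpha> k = (if k = j then z else \<one>)"
  shows "z = \<one>"
proof -
  have \<alpha>A: "\<And>k. \<alpha> k \<in> A" and \<alpha>s: "\<And>k. s - 1 \<le> k \<Longrightarrow> \<alpha> k = \<one>" using adm unfolding adm_def by auto
  have \<alpha>c: "\<And>k. \<alpha> k \<in> carrier G" using A_carr \<alpha>A by blast
  have c0: "k < j \<longrightarrow> \<alpha> k = \<one>" for k
  proof (induction k)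
    case 0 then show ?case using c[of 0] by (simp add: cf_def)
  next
    case (Suc k)
    show ?case
    proof
      assume "Suc k < j"
      then have "\<alpha> k = \<one>" using Suc by simp
      then show "\<alpha> (Suc k) = \<one>" using c[of "Suc k"] phi_one \<alpha>c[of "Suc k"] \<open>Suc k < j\<close> by (simp add: cf_def)
    qed
  qed
  have aj: "\<alpha> j = z"
  proof (cases j)
    case 0 then show ?thesis using c[of 0] by (simp add: cf_def)
  next
    case (Suc j')
    then show ?thesis using c[of j] c0[of j'] phi_one \<alpha>c[of j] by (simp add: cf_def)
  qed
  have up: "\<alpha> k = phi (\<alpha> (k - 1))" if "k > j" for k
  proof -
    have "\<alpha> k \<otimes> inv (phi (\<alpha> (k - 1))) = \<one>" using c[of k] that by (simp add: cf_def)
    then have "\<alpha> k \<otimes> inv (phi (\<alpha> (k - 1))) \<otimes> phi (\<alpha> (k - 1)) = phi (\<alpha> (k - 1))"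
      using phi_carr[OF \<alpha>A] by simp
    then show ?thesis using phi_carr[OF \<alpha>A] \<alpha>c by (simp add: m_assoc)
  qed
  have down: "s - 1 - n \<ge> j \<longrightarrow> \<alpha> (s - 1 - n) = \<one>" for n
  proof (induction n)
    case 0 then show ?case using \<alpha>s by simp
  next
    case (Suc n)
    show ?case
    proof (cases "s - 1 \<ge> Suc n")
      case False
      then have "s - 1 - Suc n = s - 1 - n" by simp
      then show ?thesis using Suc by simp
    next
      case True
      define k where "k = s - 1 - Suc n"
      have sk: "Suc k = s - 1 - n" using True unfolding k_def by simp
      show ?thesis unfolding k_def[symmetric]
      proof
        assume "j \<le> k"
        then have "\<alpha> (Suc k) = \<one>" using Suc sk by simp
        moreover have "\<alpha> (Suc k) = phi (\<alpha> k)" using up[of "Suc k"] \<open>j \<le> k\<close> by simp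
        ultimately have "phi (\<alpha> k) = phi \<one>" using phi_one by simp
        then show "\<alpha> k = \<one>" using inj_onD[OF phi_inj _ \<alpha>A one_A] by blast
      qed
    qed
  qed
  have "s - 1 - (s - 1 - j) = j" using j by simp
  then have "\<alpha> j = \<one>" using down[of "s - 1 - j"] by simp
  then show ?thesis using aj by simp
qed

lemma main:
  assumes j: "j < s" and x: "x \<in> carrier G" and y: "y \<in> carrier G"
    and eq: "to_abelianization KK (amal_incl G A phi s j x) = to_abelianization KK (amal_incl G A phi s j y)"
  shows "x = y"
proof -
  let ?D = "derived KK (carrier KK)"
  interpret K: group KK by (rule K_group)
  interpret P: group_hom KK QQ Psi by (rule Psi_hom)
  interpret Q: comm_group QQ by (rule Q_comm)
  interpret T: comm_group TT by (rule T_comm)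
  have Dsub: "subgroup ?D KK" by (rule K.derived_is_subgroup) simp
  have lx: "[(j, x)] \<in> lists SS" and ly: "[(j, y)] \<in> lists SS" using j x y by (auto simp: amal_letters_def)
  let ?ix = "EE``{[(j, x)]}" and ?iy = "EE``{[(j, y)]}"
  have cx: "?ix \<in> carrier KK" and cy: "?iy \<in> carrier KK" using K_carrI lx ly by auto
  have "?ix \<in> ?D #>\<^bsub>KK\<^esub> ?ix" by (rule K.rcos_self[OF cx Dsub])
  also have "?D #>\<^bsub>KK\<^esub> ?ix = ?D #>\<^bsub>KK\<^esub> ?iy"
    using eq unfolding to_abelianization_def amal_incl_def .
  finally obtain d where d: "d \<in> ?D" "?ix = d \<otimes>\<^bsub>KK\<^esub> ?iy" unfolding r_coset_def by blast
  have dc: "d \<in> carrier KK" using d(1) subgroup.mem_carrier[OF Dsub] by blast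
  have "Psi ` ?D = derived QQ (Psi ` carrier KK)" using P.derived_img[of "carrier KK"] by simp
  also have "\<dots> = {\<one>\<^bsub>QQ\<^esub>}" by (rule Q.derived_eq_singleton) (use P.hom_closed in blast)
  finally have "Psi d = \<one>\<^bsub>QQ\<^esub>" using d(1) by blast
  then have "Psi ?ix = \<one>\<^bsub>QQ\<^esub> \<otimes>\<^bsub>QQ\<^esub> Psi ?iy"
    unfolding d(2) using P.hom_mult[OF dc cy] by (simp only:)
  then have "Psi ?ix = Psi ?iy" using P.H.l_one[OF P.hom_closed[OF cy]] by (simp only:)
  then have e: "RR #>\<^bsub>TT\<^esub> wmap G [(j, x)] = RR #>\<^bsub>TT\<^esub> wmap G [(j, y)]"
    using Psi_class[OF lx] Psi_class[OF ly] by simp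
  have "wmap G [(j, x)] \<in> RR #>\<^bsub>TT\<^esub> wmap G [(j, y)]"
    using T.repr_independenceD[OF R_sub wmap_carr[OF lx] e[symmetric]] .
  then obtain \<alpha> where \<alpha>: "adm \<alpha>" "wmap G [(j, x)] = cf G phi \<alpha> \<otimes>\<^bsub>TT\<^esub> wmap G [(j, y)]"
    unfolding r_coset_def R_def' by blast
  have cc: "cf G phi \<alpha> k \<in> carrier G" for k using cf_carr[OF \<alpha>(1)] by (simp add: T_carr)
  have pk: "(if k = j then x else \<one>) = cf G phi \<alpha> k \<otimes> (if k = j then y else \<one>)" for k
    using fun_cong[OF \<alpha>(2), of k] x y cc[of k] by (cases "k = j") (simp_all add: T_mult)
  have c: "cf G phi \<alpha> k = (if k = j then x \<otimes> inv y else \<one>)" for k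
  proof (cases "k = j")
    case True
    then have "x = cf G phi \<alpha> k \<otimes> y" using pk[of k] by simp
    then have "x \<otimes> inv y = cf G phi \<alpha> k \<otimes> y \<otimes> inv y" by simp
    then show ?thesis using True cc[of k] y by (simp add: m_assoc)
  next
    case False then show ?thesis using pk[of k] cc[of k] by simp
  qed
  have "x \<otimes> inv y = \<one>" by (rule kernel[OF \<alpha>(1) j _ c]) (use x y in simp)
  then have "x \<otimes> inv y \<otimes> y = y" using y by simp
  then show ?thesis using x y by (simp add: m_assoc)
qed

end

theorem lemma5p7:
  fixes G :: "'g monoid" and p :: nat and A B :: "'g set" and phi :: "'g \<Rightarrow> 'g"
    and r s :: nat
  assumes "Factorial_Ring.prime p"
    and "comm_group G" and "finite (carrier G)" and "\<exists>n. order G = p ^ n"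
    and "subgroup A G" and "subgroup B G"
    and "phi \<in> iso (G\<lparr>carrier := A\<rparr>) (G\<lparr>carrier := B\<rparr>)"
    and "r \<ge> 1"
    and "\<forall>s'. s' > r \<longrightarrow> (\<forall>g \<in> carrier G.
           g \<in> core A B phi \<longleftrightarrow> (\<forall>i < s'. iter_defined G A phi i g))"
    and "s > r"
  shows "\<forall>j < s. inj_on (\<lambda>x. to_abelianization (amal_product G A phi s) (amal_incl G A phi s j x))
                        (carrier G)"
proof -
  interpret amal G A B phi s
    by (rule amal.intro[OF assms(2)]) (simp add: amal_axioms_def assms(5,6,7))
  show ?thesis by (auto intro!: inj_onI main)
qed

end
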